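(* Let $N\ge2$ and let $a_1,\dots,a_m$ be transpositions in $S_N$ each of the form $(\alpha,N)$ with $1\le\alpha\le N-1$. Let $\pi$ be the partition of $\{1,\dots,m\}$ in which $j,k$ are in the same block iff $a_j=a_k$, and let $\sigma=a_1\cdots a_m$. Then $2|\pi|\ge|\sigma|+m$ if and only if $\pi\in NC_{1,2}(m)$.
   Context: $|\pi|$ is the number of blocks of $\pi$. For a permutation $\sigma$, $|\sigma|$ is the minimal number of transpositions whose product is $\sigma$. A partition of $\{1,\dots,m\}$ is non-crossing if there are no $k_1<l_1<k_2<l_2$ with $k_1,k_2$ in one block and $l_1,l_2$ in a different block. $NC_{1,2}(m)$ is the set of non-crossing partitions of $\{1,\dots,m\}$ all of whose blocks have one or two elements. *)

theory Defs
  imports "HOL-Library.Disjoint_Sets" "HOL-Combinatorics.Transposition"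
begin

text \<open>Permutations of {1..N} are represented as functions nat => nat fixing everything
outside {1..N}; a transposition of S_N is transpose i j with i ~= j in {1..N}.\<close>

definition is_transp :: "nat \<Rightarrow> (nat \<Rightarrow> nat) \<Rightarrow> bool" where
  "is_transp N t \<longleftrightarrow> (\<exists>i j. i \<in> {1..N} \<and> j \<in> {1..N} \<and> i \<noteq> j \<and> t = transpose i j)"

definition perm_length :: "nat \<Rightarrow> (nat \<Rightarrow> nat) \<Rightarrow> nat" where
  "perm_length N \<sigma> = (LEAST k. \<exists>ts. length ts = k \<and> (\<forall>t\<in>set ts. is_transp N t)
                                  \<and> \<sigma> = foldr (\<circ>) ts id)"

definition seq_prod :: "(nat \<Rightarrow> nat \<Rightarrow> nat) \<Rightarrow> nat \<Rightarrow> nat \<Rightarrow> nat" where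
  "seq_prod a m = foldr (\<lambda>j f. a j \<circ> f) [1..<m+1] id"

definition kernel_partition :: "(nat \<Rightarrow> 'b) \<Rightarrow> nat \<Rightarrow> nat set set" where
  "kernel_partition a m = {{k \<in> {1..m}. a k = a j} | j. j \<in> {1..m}}"

definition noncrossing :: "nat set set \<Rightarrow> bool" where
  "noncrossing P \<longleftrightarrow> (\<forall>B\<in>P. \<forall>C\<in>P. B \<noteq> C \<longrightarrow>
     \<not> (\<exists>k1 l1 k2 l2. k1 < l1 \<and> l1 < k2 \<and> k2 < l2 \<and> k1 \<in> B \<and> k2 \<in> B \<and> l1 \<in> C \<and> l2 \<in> C))"

definition NC12 :: "nat \<Rightarrow> nat set set set" where
  "NC12 m = {P. partition_on {1..m} P \<and> noncrossing P \<and> (\<forall>B\<in>P. card B = 1 \<or> card B = 2)}"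

end

theory Submission
  imports Defs
begin

definition prodw :: "(nat \<Rightarrow> nat) list \<Rightarrow> nat \<Rightarrow> nat" where
  "prodw ts = foldr (\<circ>) ts id"

lemma prodw_Nil[simp]: "prodw [] = id" by (simp add: prodw_def)
lemma prodw_Cons[simp]: "prodw (t#ts) = t \<circ> prodw ts" by (simp add: prodw_def)

definition wordof :: "nat \<Rightarrow> (nat \<Rightarrow> nat) list \<Rightarrow> (nat \<Rightarrow> nat) \<Rightarrow> bool" where
  "wordof N ts \<sigma> \<longleftrightarrow> (\<forall>t\<in>set ts. is_transp N t) \<and> \<sigma> = prodw ts"

lemma prodw_append[simp]: "prodw (xs @ ys) = prodw xs \<circ> prodw ys"
  by (induction xs) (auto simp: comp_assoc)

lemma is_transp_invol[simp]: "is_transp N t \<Longrightarrow> t (t x) = x"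
  by (auto simp: is_transp_def)

lemma wordof_append: "wordof N xs f \<Longrightarrow> wordof N ys g \<Longrightarrow> wordof N (xs @ ys) (f \<circ> g)"
  by (auto simp: wordof_def prodw_append)

lemma perm_length_alt: "perm_length N \<sigma> = (LEAST k. \<exists>ts. length ts = k \<and> wordof N ts \<sigma>)"
  by (simp add: perm_length_def wordof_def prodw_def)

lemma pl_le: "wordof N ts \<sigma> \<Longrightarrow> perm_length N \<sigma> \<le> length ts"
  unfolding perm_length_alt by (rule Least_le) auto

lemma pl_ex: assumes "wordof N ts \<sigma>"
  shows "\<exists>ts'. wordof N ts' \<sigma> \<and> length ts' = perm_length N \<sigma>"
proof -
  have "\<exists>k ts. length ts = k \<and> wordof N ts \<sigma>"
    using assms by blast
  then have "\<exists>ts. length ts = perm_length N \<sigma> \<and> wordof N ts \<sigma>"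
    unfolding perm_length_alt by (rule LeastI_ex)
  then show ?thesis by blast
qed

lemma pl_zero: assumes "wordof N ts \<sigma>" "perm_length N \<sigma> = 0" shows "\<sigma> = id"
  using pl_ex[OF assms(1)] assms(2) by (auto simp: wordof_def)

lemma is_transp_comp_self: "is_transp N t \<Longrightarrow> t \<circ> t = id"
  by (auto simp: is_transp_def)

lemma wordof_single: "is_transp N t \<Longrightarrow> wordof N [t] t"
  by (auto simp: wordof_def)

lemma pl_right_le: assumes "wordof N ts \<sigma>" "is_transp N t"
  shows "perm_length N (\<sigma> \<circ> t) \<le> perm_length N \<sigma> + 1"
proof -
  obtain ts' where "wordof N ts' \<sigma>" "length ts' = perm_length N \<sigma>" using pl_ex[OF assms(1)] by blast
  then have "wordof N (ts' @ [t]) (\<sigma> \<circ> t)" using wordof_append wordof_single assms(2) by blast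
  from pl_le[OF this] show ?thesis using \<open>length ts' = _\<close> by simp
qed

lemma pl_right_ge: assumes "wordof N ts \<sigma>" "is_transp N t"
  shows "perm_length N \<sigma> \<le> perm_length N (\<sigma> \<circ> t) + 1"
proof -
  have w: "wordof N (ts @ [t]) (\<sigma> \<circ> t)" using wordof_append wordof_single assms by blast
  have "\<sigma> = (\<sigma> \<circ> t) \<circ> t" using assms(2) by (simp add: fun_eq_iff)
  then show ?thesis using pl_right_le[OF w assms(2)] by simp
qed

lemma is_transp_conj: assumes "is_transp N t" "is_transp N s" shows "is_transp N (t \<circ> s \<circ> t)"
proof -
  obtain i j where ij: "i \<in> {1..N}" "j \<in> {1..N}" "i \<noteq> j" "t = transpose i j" using assms(1) by (auto simp: is_transp_def)
  obtain a b where ab: "a \<in> {1..N}" "b \<in> {1..N}" "a \<noteq> b" "s = transpose a b" using assms(2) by (auto simp: is_transp_def)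
  have "t \<circ> s \<circ> t = transpose (t a) (t b)"
    using ij ab by (auto simp: fun_eq_iff transpose_def)
  moreover have "t a \<in> {1..N}" "t b \<in> {1..N}" "t a \<noteq> t b" using ij ab by (auto simp: transpose_def)
  ultimately show ?thesis unfolding is_transp_def by blast
qed

lemma wordof_conj: assumes "wordof N ts \<sigma>" "is_transp N t"
  shows "wordof N (map (\<lambda>s. t \<circ> s \<circ> t) ts) (t \<circ> \<sigma> \<circ> t)"
proof -
  have tt: "t \<circ> t = id" using is_transp_comp_self[OF assms(2)] .
  have "prodw (map (\<lambda>s. t \<circ> s \<circ> t) ts) = t \<circ> prodw ts \<circ> t" for ts
  proof (induction ts)
    case Nil then show ?case using tt by simp
  next
    case (Cons s ts)
    show ?case using Cons assms(2) by (simp add: fun_eq_iff)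
  qed
  then show ?thesis using assms is_transp_conj unfolding wordof_def by auto
qed

lemma pl_conj: assumes "wordof N ts \<sigma>" "is_transp N t"
  shows "perm_length N (t \<circ> \<sigma> \<circ> t) = perm_length N \<sigma>"
proof -
  have tt: "t \<circ> t = id" using is_transp_comp_self[OF assms(2)] .
  obtain ts' where ts': "wordof N ts' \<sigma>" "length ts' = perm_length N \<sigma>" using pl_ex[OF assms(1)] by blast
  have 1: "perm_length N (t \<circ> \<sigma> \<circ> t) \<le> perm_length N \<sigma>"
    using pl_le[OF wordof_conj[OF ts'(1) assms(2)]] ts'(2) by simp
  have w2: "wordof N (map (\<lambda>s. t \<circ> s \<circ> t) ts) (t \<circ> \<sigma> \<circ> t)" using wordof_conj assms by blast
  obtain us where us: "wordof N us (t \<circ> \<sigma> \<circ> t)" "length us = perm_length N (t \<circ> \<sigma> \<circ> t)" using pl_ex[OF w2] by blast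
  have "t \<circ> (t \<circ> \<sigma> \<circ> t) \<circ> t = \<sigma>" using assms(2) by (simp add: fun_eq_iff)
  then have "wordof N (map (\<lambda>s. t \<circ> s \<circ> t) us) \<sigma>" using wordof_conj[OF us(1) assms(2)] by simp
  from pl_le[OF this] us(2) have "perm_length N \<sigma> \<le> perm_length N (t \<circ> \<sigma> \<circ> t)" by simp
  with 1 show ?thesis by simp
qed

lemma bij_prodw: "\<forall>t\<in>set ts. is_transp N t \<Longrightarrow> bij (prodw ts)"
proof (induction ts)
  case Nil then show ?case by (simp only: prodw_Nil bij_id)
next
  case (Cons t ts)
  then have "bij t" by (auto simp: is_transp_def)
  moreover have "bij (prodw ts)" using Cons by simp
  ultimately show ?case using bij_comp by (simp only: prodw_Cons) blast
qed

lemma prodw_outside: "\<forall>t\<in>set ts. is_transp N t \<Longrightarrow> x \<notin> {1..N} \<Longrightarrow> prodw ts x = x"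
proof (induction ts)
  case Nil then show ?case by simp
next
  case (Cons t ts)
  then show ?case by (auto simp: is_transp_def)
qed

lemma prodw_fix: "\<forall>t\<in>set ts. t a = a \<Longrightarrow> prodw ts a = a"
  by (induction ts) auto

lemma transp_mover: assumes "is_transp N t" "t a \<noteq> a"
  shows "t = transpose a (t a)" "a \<in> {1..N}" "t a \<in> {1..N}" "t a \<noteq> a"
proof -
  obtain i j where ij: "i \<in> {1..N}" "j \<in> {1..N}" "i \<noteq> j" "t = transpose i j" using assms(1) by (auto simp: is_transp_def)
  have "a = i \<or> a = j" using assms(2) ij(4) by (metis transpose_apply_other)
  then have "(a = i \<and> t a = j) \<or> (a = j \<and> t a = i)" using ij(4) by auto
  then show "t = transpose a (t a)" "a \<in> {1..N}" "t a \<in> {1..N}" "t a \<noteq> a"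
    using ij assms(2) by (auto simp: transpose_commute)
qed

lemma is_transpI: "i \<in> {1..N} \<Longrightarrow> j \<in> {1..N} \<Longrightarrow> i \<noteq> j \<Longrightarrow> is_transp N (transpose i j)"
  unfolding is_transp_def by blast

lemma elim_aux:
  assumes "\<forall>t\<in>set ts. is_transp N t" "prodw ts a = a" "\<exists>t\<in>set ts. t a \<noteq> a"
  shows "\<exists>ts'. (\<forall>t\<in>set ts'. is_transp N t) \<and> prodw ts' = prodw ts \<and> length ts' + 2 \<le> length ts"
  using assms
proof (induction "length (filter (\<lambda>t. t a \<noteq> a) ts)" arbitrary: ts rule: less_induct)
  case less
  from less.prems(3) obtain A t1 R where ts: "ts = A @ t1 # R" "t1 a \<noteq> a" "\<forall>u\<in>set A. \<not> u a \<noteq> a"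
    using split_list_first_prop[of ts "\<lambda>u. u a \<noteq> a"] by blast
  have trA: "\<forall>t\<in>set A. is_transp N t" and tr1: "is_transp N t1" and trR: "\<forall>t\<in>set R. is_transp N t"
    using less.prems(1) ts(1) by auto
  have fixA: "prodw A a = a" using ts(3) prodw_fix by auto
  have injA: "inj (prodw A)" using bij_prodw[OF trA] bij_is_inj by blast
  have "\<exists>u\<in>set R. u a \<noteq> a"
  proof (rule ccontr)
    assume "\<not> ?thesis"
    then have "prodw R a = a" using prodw_fix by auto
    then have "prodw ts a = prodw A (t1 a)" using ts(1) by simp
    moreover have "prodw A (t1 a) \<noteq> a" using ts(2) injA fixA by (metis inj_eq)
    ultimately show False using less.prems(2) by simp
  qed
  then obtain C t2 D where R: "R = C @ t2 # D" "t2 a \<noteq> a" "\<forall>u\<in>set C. \<not> u a \<noteq> a"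
    using split_list_first_prop[of R "\<lambda>u. u a \<noteq> a"] by blast
  have trC: "\<forall>t\<in>set C. is_transp N t" and tr2: "is_transp N t2" and trD: "\<forall>t\<in>set D. is_transp N t"
    using trR R(1) by simp_all
  define x where "x = t1 a"
  define y where "y = t2 a"
  have t1: "t1 = transpose a x" "a \<in> {1..N}" "x \<in> {1..N}" "x \<noteq> a"
    using transp_mover[OF tr1 ts(2), folded x_def] by blast+
  have t2: "t2 = transpose a y" "y \<in> {1..N}" "y \<noteq> a"
    using transp_mover[OF tr2 R(2), folded y_def] by blast+
  have fixC: "prodw C a = a" using R(3) prodw_fix by auto
  have bC: "bij (prodw C)" using bij_prodw[OF trC] .
  then obtain z where z: "prodw C z = x" by (metis bij_pointE)
  have injC: "inj (prodw C)" using bC bij_is_inj by blast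
  have zN: "z \<in> {1..N}"
  proof (rule ccontr)
    assume "z \<notin> {1..N}"
    then have "prodw C z = z" using prodw_outside[OF trC] by blast
    then show False using z t1 \<open>z \<notin> {1..N}\<close> by simp
  qed
  have za: "z \<noteq> a" using z fixC t1(4) by auto
  have key: "t1 \<circ> prodw C = prodw C \<circ> transpose a z"
  proof
    fix w
    show "(t1 \<circ> prodw C) w = (prodw C \<circ> transpose a z) w"
    proof (cases "w = a \<or> w = z")
      case True
      then show ?thesis using z fixC t1(1) za by auto
    next
      case False
      then have "prodw C w \<noteq> prodw C a" "prodw C w \<noteq> prodw C z" using injC by (simp_all add: inj_eq)
      then have "prodw C w \<noteq> a" "prodw C w \<noteq> x" using fixC z by simp_all
      then show ?thesis using False t1(1) by simp
    qed
  qed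
  have prod_ts: "prodw ts = prodw A \<circ> prodw C \<circ> (transpose a z \<circ> transpose a y) \<circ> prodw D"
  proof -
    have "prodw ts = prodw A \<circ> (t1 \<circ> prodw C) \<circ> t2 \<circ> prodw D" using ts(1) R(1) by (simp add: comp_assoc)
    also have "\<dots> = prodw A \<circ> prodw C \<circ> (transpose a z \<circ> transpose a y) \<circ> prodw D"
      using key t2(1) by (simp add: comp_assoc)
    finally show ?thesis .
  qed
  show ?case
  proof (cases "z = y")
    case True
    let ?ts' = "A @ C @ D"
    have "prodw ?ts' = prodw ts" using prod_ts True by (simp add: comp_assoc)
    moreover have "\<forall>t\<in>set ?ts'. is_transp N t" using trA trC trD by auto
    moreover have "length ?ts' + 2 \<le> length ts" using ts(1) R(1) by simp
    ultimately show ?thesis by blast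
  next
    case False
    let ?ts2 = "A @ C @ [transpose a y, transpose z y] @ D"
    have eq: "transpose a z \<circ> transpose a y = transpose a y \<circ> transpose z y"
      using False za t2(3) by (auto simp: fun_eq_iff transpose_def)
    have p2: "prodw ?ts2 = prodw ts" using prod_ts eq by (simp add: comp_assoc)
    have "is_transp N (transpose a y)" "is_transp N (transpose z y)"
      using t1(2) t2(2,3) zN False za by (auto intro!: is_transpI)
    then have tr2': "\<forall>t\<in>set ?ts2. is_transp N t"
      using trA trC trD by auto
    have fA: "filter (\<lambda>t. t a \<noteq> a) A = []" using ts(3) by (simp add: filter_empty_conv)
    have fC: "filter (\<lambda>t. t a \<noteq> a) C = []" using R(3) by (simp add: filter_empty_conv)
    have "transpose z y a = a" using za False t2(3) by simp
    then have "length (filter (\<lambda>t. t a \<noteq> a) ?ts2) = Suc (length (filter (\<lambda>t. t a \<noteq> a) D))"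
      using fA fC t2(3) by simp
    moreover have "length (filter (\<lambda>t. t a \<noteq> a) ts) = Suc (Suc (length (filter (\<lambda>t. t a \<noteq> a) D)))"
      using fA fC ts(1,2) R(1,2) by simp
    ultimately have "length (filter (\<lambda>t. t a \<noteq> a) ?ts2) < length (filter (\<lambda>t. t a \<noteq> a) ts)"
      by simp
    moreover have "\<exists>t\<in>set ?ts2. t a \<noteq> a" using t2(3) by simp
    moreover have "prodw ?ts2 a = a" using p2 less.prems(2) by simp
    ultimately obtain ts' where "\<forall>t\<in>set ts'. is_transp N t" "prodw ts' = prodw ?ts2" "length ts' + 2 \<le> length ?ts2"
      using less.hyps tr2' by blast
    then show ?thesis using p2 ts(1) R(1) by auto
  qed
qed

lemma pl_fresh: assumes "wordof N ts \<sigma>" "\<sigma> a = a" "a \<in> {1..N}" "a \<noteq> N"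
  shows "perm_length N (\<sigma> \<circ> transpose a N) = perm_length N \<sigma> + 1"
proof -
  have tr: "is_transp N (transpose a N)" using assms(3,4) unfolding is_transp_def
    by (intro exI[of _ a] exI[of _ N]) auto
  have w: "wordof N (ts @ [transpose a N]) (\<sigma> \<circ> transpose a N)" using wordof_append wordof_single assms(1) tr by blast
  obtain us where us: "wordof N us (\<sigma> \<circ> transpose a N)" "length us = perm_length N (\<sigma> \<circ> transpose a N)"
    using pl_ex[OF w] by blast
  have "\<sigma> = prodw (us @ [transpose a N])" using us(1) unfolding wordof_def by (simp add: fun_eq_iff) (metis transpose_involutory)
  then obtain vs where vs: "\<forall>t\<in>set vs. is_transp N t" "prodw vs = \<sigma>" "length vs + 2 \<le> length us + 1"
    using elim_aux[of "us @ [transpose a N]" N a] us(1) tr assms(2,4) unfolding wordof_def by auto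
  then have "perm_length N \<sigma> \<le> length vs" using pl_le[of N vs \<sigma>] unfolding wordof_def by auto
  then have "perm_length N \<sigma> + 1 \<le> perm_length N (\<sigma> \<circ> transpose a N)" using vs(3) us(2) by simp
  with pl_right_le[OF assms(1) tr] show ?thesis by simp
qed

definition crossi :: "'b list \<Rightarrow> bool" where
  "crossi xs \<longleftrightarrow> (\<exists>i j k l. i < j \<and> j < k \<and> k < l \<and> l < length xs \<and>
      xs!i = xs!k \<and> xs!j = xs!l \<and> xs!i \<noteq> xs!j)"

definition nc12 :: "'b list \<Rightarrow> bool" where
  "nc12 xs \<longleftrightarrow> (\<forall>x. count_list xs x \<le> 2) \<and> \<not> crossi xs"

lemma crossi_rot1_a: assumes "crossi (x # xs)" shows "crossi (xs @ [x])"
proof -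
  obtain i j k l where c: "i < j" "j < k" "k < l" "l < length (x#xs)"
      "(x#xs)!i = (x#xs)!k" "(x#xs)!j = (x#xs)!l" "(x#xs)!i \<noteq> (x#xs)!j"
    using assms unfolding crossi_def by blast
  show ?thesis
  proof (cases "i = 0")
    case True
    have e: "(xs@[x])!(j-1) = (x#xs)!j" "(xs@[x])!(k-1) = (x#xs)!k" "(xs@[x])!(l-1) = (x#xs)!l"
        "(xs@[x])!(length xs) = x"
      using c True by (auto simp: nth_append nth_Cons')
    have "j - 1 < k - 1" "k - 1 < l - 1" "l - 1 < length xs" using c True by auto
    moreover have "(xs@[x])!(j-1) = (xs@[x])!(l-1)" "(xs@[x])!(k-1) = (xs@[x])!(length xs)"
        "(xs@[x])!(j-1) \<noteq> (xs@[x])!(k-1)"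
      using e c True by auto
    ultimately show ?thesis unfolding crossi_def by (intro exI[of _ "j-1"] exI[of _ "k-1"] exI[of _ "l-1"] exI[of _ "length xs"]) simp
  next
    case False
    have e: "(xs@[x])!(i-1) = (x#xs)!i" "(xs@[x])!(j-1) = (x#xs)!j" "(xs@[x])!(k-1) = (x#xs)!k" "(xs@[x])!(l-1) = (x#xs)!l"
      using c False by (auto simp: nth_append nth_Cons')
    show ?thesis unfolding crossi_def
      by (intro exI[of _ "i-1"] exI[of _ "j-1"] exI[of _ "k-1"] exI[of _ "l-1"]) (use c False e in auto)
  qed
qed

lemma crossi_rot1_b: assumes "crossi (xs @ [x])" shows "crossi (x # xs)"
proof -
  obtain i j k l where c: "i < j" "j < k" "k < l" "l < length (xs@[x])"
      "(xs@[x])!i = (xs@[x])!k" "(xs@[x])!j = (xs@[x])!l" "(xs@[x])!i \<noteq> (xs@[x])!j"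
    using assms unfolding crossi_def by blast
  show ?thesis
  proof (cases "l = length xs")
    case True
    have e: "(x#xs)!(i+1) = (xs@[x])!i" "(x#xs)!(j+1) = (xs@[x])!j" "(x#xs)!(k+1) = (xs@[x])!k"
        "(xs@[x])!l = x" "(x#xs)!0 = x"
      using c True by (auto simp: nth_append)
    show ?thesis unfolding crossi_def
      by (intro exI[of _ "0"] exI[of _ "i+1"] exI[of _ "j+1"] exI[of _ "k+1"]) (use c e True in auto)
  next
    case False
    have e: "(x#xs)!(i+1) = (xs@[x])!i" "(x#xs)!(j+1) = (xs@[x])!j" "(x#xs)!(k+1) = (xs@[x])!k" "(x#xs)!(l+1) = (xs@[x])!l"
      using c False by (auto simp: nth_append)
    show ?thesis unfolding crossi_def
      by (intro exI[of _ "i+1"] exI[of _ "j+1"] exI[of _ "k+1"] exI[of _ "l+1"]) (use c e False in auto)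
  qed
qed

lemma crossi_rot: "crossi (p @ q) \<longleftrightarrow> crossi (q @ p)"
proof (induction p arbitrary: q)
  case Nil then show ?case by simp
next
  case (Cons x p)
  have "crossi ((x # p) @ q) \<longleftrightarrow> crossi ((p @ q) @ [x])"
    using crossi_rot1_a crossi_rot1_b by (metis append_Cons)
  also have "\<dots> \<longleftrightarrow> crossi (p @ (q @ [x]))" by simp
  also have "\<dots> \<longleftrightarrow> crossi ((q @ [x]) @ p)" using Cons by blast
  finally show ?case by simp
qed

lemma nc12_rot: "nc12 (p @ q) \<longleftrightarrow> nc12 (q @ p)"
  unfolding nc12_def using crossi_rot by (metis add.commute count_list_append)

lemma crossi_append_left: assumes "crossi zs" shows "crossi (zs @ ys)"
proof -
  obtain i j k l where c: "i < j" "j < k" "k < l" "l < length zs"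
      "zs!i = zs!k" "zs!j = zs!l" "zs!i \<noteq> zs!j"
    using assms unfolding crossi_def by blast
  have e: "(zs@ys)!i = zs!i" "(zs@ys)!j = zs!j" "(zs@ys)!k = zs!k" "(zs@ys)!l = zs!l"
    using c by (simp_all add: nth_append)
  show ?thesis unfolding crossi_def
    by (intro exI[of _ i] exI[of _ j] exI[of _ k] exI[of _ l]) (use c e in simp)
qed

lemma crossi_prefixI: assumes "i < j" "j < k" "k < l" "l < length zs"
      "(zs@ys)!i = (zs@ys)!k" "(zs@ys)!j = (zs@ys)!l" "(zs@ys)!i \<noteq> (zs@ys)!j"
  shows "crossi zs"
proof -
  have e: "(zs@ys)!i = zs!i" "(zs@ys)!j = zs!j" "(zs@ys)!k = zs!k" "(zs@ys)!l = zs!l"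
    using assms by (simp_all add: nth_append)
  show ?thesis unfolding crossi_def
    by (intro exI[of _ i] exI[of _ j] exI[of _ k] exI[of _ l]) (use assms e in simp)
qed

lemma crossi_snoc_fresh: assumes "x \<notin> set zs" shows "crossi (zs @ [x]) \<longleftrightarrow> crossi zs"
proof
  assume "crossi (zs @ [x])"
  then obtain i j k l where c: "i < j" "j < k" "k < l" "l < length (zs@[x])"
      "(zs@[x])!i = (zs@[x])!k" "(zs@[x])!j = (zs@[x])!l" "(zs@[x])!i \<noteq> (zs@[x])!j"
    unfolding crossi_def by blast
  have "l \<noteq> length zs"
  proof
    assume "l = length zs"
    then have jl: "j < length zs" using c by simp
    have "(zs@[x])!l = x" using \<open>l = length zs\<close> by simp
    then have "zs!j = x" using c(6) jl by (simp add: nth_append)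
    then show False using assms jl by (metis nth_mem)
  qed
  then have "l < length zs" using c by simp
  then show "crossi zs" using c crossi_prefixI by blast
next
  assume "crossi zs"
  then show "crossi (zs @ [x])" by (rule crossi_append_left)
qed

lemma crossi_snoc2_fresh: assumes "x \<notin> set zs" shows "crossi (zs @ [x, x]) \<longleftrightarrow> crossi zs"
proof
  assume "crossi (zs @ [x, x])"
  then obtain i j k l where c: "i < j" "j < k" "k < l" "l < length (zs@[x,x])"
      "(zs@[x,x])!i = (zs@[x,x])!k" "(zs@[x,x])!j = (zs@[x,x])!l" "(zs@[x,x])!i \<noteq> (zs@[x,x])!j"
    unfolding crossi_def by blast
  have "l < length zs"
  proof (rule ccontr)
    assume "\<not> l < length zs"
    then have "l = length zs \<or> l = Suc (length zs)" using c(4) by auto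
    then have "(zs@[x,x])!l = x" by (auto simp: nth_append)
    then have "(zs@[x,x])!j = x" using c by simp
    moreover have "j \<ge> length zs"
    proof (rule ccontr)
      assume "\<not> j \<ge> length zs"
      then have "(zs@[x,x])!j = zs!j" by (simp add: nth_append)
      then show False using \<open>(zs@[x,x])!j = x\<close> assms \<open>\<not> j \<ge> length zs\<close> by (metis not_le nth_mem)
    qed
    ultimately show False using c \<open>\<not> l < length zs\<close> by auto
  qed
  then show "crossi zs" using c crossi_prefixI by blast
next
  assume "crossi zs"
  then show "crossi (zs @ [x, x])" by (rule crossi_append_left)
qed

lemma count_idx: "count_list xs y = card {i. i < length xs \<and> xs!i = y}"
proof -
  have "count_list xs y = card {i. i < length xs \<and> y = xs!i}"
    by (simp add: count_list_eq_length_filter length_filter_conv_card)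
  also have "{i. i < length xs \<and> y = xs!i} = {i. i < length xs \<and> xs!i = y}" by auto
  finally show ?thesis .
qed

lemma other_occ: assumes "count_list xs (xs!k) \<ge> 2" "k < length xs"
  shows "\<exists>k'. k' < length xs \<and> k' \<noteq> k \<and> xs!k' = xs!k"
proof (rule ccontr)
  assume "\<not> ?thesis"
  then have S: "{i. i < length xs \<and> xs!i = xs!k} \<subseteq> {k}" by auto
  have "card {i. i < length xs \<and> xs!i = xs!k} \<le> 1" using card_mono[OF _ S] by simp
  then show False using assms(1) count_idx[of xs "xs!k"] by simp
qed

lemma mingap_ex: assumes "i0 < j0" "j0 < length xs" "xs!i0 = xs!j0"
  obtains i j where "i < j" "j < length xs" "xs!i = xs!j"
    "\<forall>i' j'. i' < j' \<and> j' < length xs \<and> xs!i' = xs!j' \<longrightarrow> j - i \<le> j' - i'"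
proof -
  let ?P = "\<lambda>d. \<exists>i j. i < j \<and> j < length xs \<and> xs!i = xs!j \<and> j - i = d"
  have "?P (j0 - i0)" using assms by blast
  then have "?P (LEAST d. ?P d)" by (rule LeastI)
  then obtain i j where ij: "i < j" "j < length xs" "xs!i = xs!j" "j - i = (LEAST d. ?P d)" by blast
  have "\<forall>i' j'. i' < j' \<and> j' < length xs \<and> xs!i' = xs!j' \<longrightarrow> j - i \<le> j' - i'"
  proof (intro allI impI)
    fix i' j' assume "i' < j' \<and> j' < length xs \<and> xs!i' = xs!j'"
    then have "?P (j' - i')" by blast
    then show "j - i \<le> j' - i'" unfolding ij(4) by (rule Least_le)
  qed
  then show ?thesis using that ij by blast
qed

lemma mingap: assumes "\<not> crossi xs" "i < j" "j < length xs" "xs!i = xs!j"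
    "\<forall>i' j'. i' < j' \<and> j' < length xs \<and> xs!i' = xs!j' \<longrightarrow> j - i \<le> j' - i'"
    "i < k" "k < j" "k' < length xs" "k' \<noteq> k"
  shows "xs!k' \<noteq> xs!k"
proof
  assume eq: "xs!k' = xs!k"
  show False
  proof (cases "xs!k = xs!i")
    case True
    then have "j - i \<le> k - i" using assms(5)[rule_format, of i k] assms by auto
    then show ?thesis using assms by simp
  next
    case False
    have "k' \<noteq> i" "k' \<noteq> j" using eq False assms(4) by auto
    consider "k' < i" | "j < k'" | "i < k' \<and> k' < k" | "k < k' \<and> k' < j"
      using \<open>k' \<noteq> i\<close> \<open>k' \<noteq> j\<close> assms(9) by linarith
    then show ?thesis
    proof cases
      case 1
      then have "crossi xs" unfolding crossi_def using assms eq False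
        by (intro exI[of _ k'] exI[of _ i] exI[of _ k] exI[of _ j]) auto
      then show ?thesis using assms(1) by simp
    next
      case 2
      then have "crossi xs" unfolding crossi_def using assms eq False
        by (intro exI[of _ i] exI[of _ k] exI[of _ j] exI[of _ k']) auto
      then show ?thesis using assms(1) by simp
    next
      case 3
      then have "j - i \<le> k - k'" using assms(5)[rule_format, of k' k] assms eq by auto
      then show ?thesis using 3 assms by linarith
    next
      case 4
      then have "j - i \<le> k' - k" using assms(5)[rule_format, of k k'] assms eq by auto
      then show ?thesis using 4 assms by linarith
    qed
  qed
qed

lemma nc12_snoc_fresh: assumes "x \<notin> set zs" shows "nc12 (zs @ [x]) \<longleftrightarrow> nc12 zs"
proof -
  have "(\<forall>y. count_list (zs @ [x]) y \<le> 2) \<longleftrightarrow> (\<forall>y. count_list zs y \<le> 2)"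
  proof
    assume "\<forall>y. count_list (zs @ [x]) y \<le> 2"
    then show "\<forall>y. count_list zs y \<le> 2" by (metis count_list_append le_add1 order.trans)
  next
    assume a: "\<forall>y. count_list zs y \<le> 2"
    show "\<forall>y. count_list (zs @ [x]) y \<le> 2"
    proof
      fix y show "count_list (zs @ [x]) y \<le> 2" using a[rule_format, of y] assms by (cases "y = x") auto
    qed
  qed
  then show ?thesis unfolding nc12_def using crossi_snoc_fresh[OF assms] by simp
qed

lemma nc12_snoc2_fresh: assumes "x \<notin> set zs" shows "nc12 (zs @ [x, x]) \<longleftrightarrow> nc12 zs"
proof -
  have "(\<forall>y. count_list (zs @ [x, x]) y \<le> 2) \<longleftrightarrow> (\<forall>y. count_list zs y \<le> 2)"
  proof
    assume "\<forall>y. count_list (zs @ [x, x]) y \<le> 2"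
    then show "\<forall>y. count_list zs y \<le> 2" by (metis count_list_append le_add1 order.trans)
  next
    assume a: "\<forall>y. count_list zs y \<le> 2"
    show "\<forall>y. count_list (zs @ [x, x]) y \<le> 2"
    proof
      fix y show "count_list (zs @ [x, x]) y \<le> 2" using a[rule_format, of y] assms by (cases "y = x") auto
    qed
  qed
  then show ?thesis unfolding nc12_def using crossi_snoc2_fresh[OF assms] by simp
qed

definition star :: "nat \<Rightarrow> (nat \<Rightarrow> nat) \<Rightarrow> bool" where
  "star N w \<longleftrightarrow> (\<exists>\<alpha>. 1 \<le> \<alpha> \<and> \<alpha> \<le> N - 1 \<and> w = transpose \<alpha> N)"

lemma star_props: assumes "star N w" "N \<ge> 2"
  shows "w = transpose (w N) N" "w N \<in> {1..N}" "w N \<noteq> N" "is_transp N w"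
proof -
  obtain a where a: "1 \<le> a" "a \<le> N - 1" "w = transpose a N" using assms(1) by (auto simp: star_def)
  have aN: "a \<noteq> N" using a assms(2) by simp
  have wN: "w N = a" using a(3) by simp
  show "w = transpose (w N) N" using wN a(3) by simp
  show "w N \<in> {1..N}" using wN a by simp
  show "w N \<noteq> N" using wN aN by simp
  show "is_transp N w" using a aN assms(2) unfolding is_transp_def
    by (intro exI[of _ a] exI[of _ N]) auto
qed

lemma star_word: assumes "N \<ge> 2" "\<forall>w\<in>set ws. star N w" shows "wordof N ws (prodw ws)"
  using assms star_props(4) unfolding wordof_def by blast

lemma star_fix_other: assumes "N \<ge> 2" "star N w" "star N v" "v \<noteq> w" shows "v (w N) = w N"
proof -
  have "w N \<noteq> v N"
  proof
    assume "w N = v N"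
    then have "w = v" using star_props(1)[OF assms(2,1)] star_props(1)[OF assms(3,1)] by metis
    then show False using assms(4) by simp
  qed
  moreover have "v = transpose (v N) N" using star_props(1)[OF assms(3,1)] .
  moreover have "w N \<noteq> N" using star_props(3)[OF assms(2,1)] .
  ultimately show ?thesis by (metis transpose_apply_other)
qed

lemma prodw_fix_fresh: assumes "N \<ge> 2" "\<forall>v\<in>set ws. star N v" "star N w" "w \<notin> set ws"
  shows "prodw ws (w N) = w N"
  using assms star_fix_other by (intro prodw_fix) metis

lemma star_rot: assumes "N \<ge> 2" "\<forall>w\<in>set p. star N w" "\<forall>w\<in>set q. star N w"
  shows "perm_length N (prodw (p @ q)) = perm_length N (prodw (q @ p))"
  using assms(2,3)
proof (induction p arbitrary: q)
  case Nil then show ?case by simp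
next
  case (Cons x p)
  have sx: "star N x" using Cons.prems by simp
  have tx: "is_transp N x" using star_props(4)[OF sx assms(1)] .
  have "\<forall>w\<in>set (p @ (q @ [x])). star N w" using Cons.prems by auto
  then have W: "wordof N (p @ (q @ [x])) (prodw (p @ (q @ [x])))" using star_word assms(1) by blast
  have "x \<circ> prodw (p @ (q @ [x])) \<circ> x = prodw ((x # p) @ q)"
    using tx by (simp add: fun_eq_iff)
  then have "perm_length N (prodw ((x # p) @ q)) = perm_length N (prodw (p @ (q @ [x])))"
    using pl_conj[OF W tx] by simp
  also have "\<dots> = perm_length N (prodw ((q @ [x]) @ p))"
    using Cons.IH[of "q @ [x]"] Cons.prems by (simp del: prodw_append)
  finally show ?case by (simp only: append_assoc append_Cons append_Nil)
qed

lemma lowerQ: assumes "N \<ge> 2" "\<forall>w\<in>set ws. star N w"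
  shows "2 * card (set ws) \<le> perm_length N (prodw ws) + length ws"
  using assms(2)
proof (induction ws rule: rev_induct)
  case Nil then show ?case by simp
next
  case (snoc w ws)
  have sw: "star N w" and sws: "\<forall>v\<in>set ws. star N v" using snoc.prems by auto
  have W: "wordof N ws (prodw ws)" using star_word[OF assms(1) sws] .
  have tw: "is_transp N w" using star_props(4)[OF sw assms(1)] .
  have IH: "2 * card (set ws) \<le> perm_length N (prodw ws) + length ws" using snoc.IH sws by simp
  have pe: "prodw (ws @ [w]) = prodw ws \<circ> w" by (simp only: prodw_append prodw_Cons prodw_Nil comp_id)
  have le: "length (ws @ [w]) = Suc (length ws)" by simp
  show ?case
  proof (cases "w \<in> set ws")
    case True
    have "perm_length N (prodw ws) \<le> perm_length N (prodw ws \<circ> w) + 1" using pl_right_ge[OF W tw] .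
    moreover have "card (set (ws @ [w])) = card (set ws)" using True by (simp add: insert_absorb)
    ultimately show ?thesis using IH unfolding pe le by linarith
  next
    case False
    have fx: "prodw ws (w N) = w N" using prodw_fix_fresh[OF assms(1) sws sw False] .
    have "perm_length N (prodw ws \<circ> transpose (w N) N) = perm_length N (prodw ws) + 1"
      using pl_fresh[OF W fx] star_props(2,3)[OF sw assms(1)] by blast
    then have "perm_length N (prodw ws \<circ> w) = perm_length N (prodw ws) + 1"
      using star_props(1)[OF sw assms(1)] by metis
    moreover have "card (set (ws @ [w])) = Suc (card (set ws))" using False by simp
    ultimately show ?thesis using IH unfolding pe le by linarith
  qed
qed

lemma decomp2: assumes "Suc i < length ws"
  shows "ws = take i ws @ [ws!i, ws!Suc i] @ drop (Suc (Suc i)) ws"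
proof -
  have "drop i ws = ws!i # ws!Suc i # drop (Suc (Suc i)) ws"
    using assms by (metis Cons_nth_drop_Suc Suc_lessD)
  then show ?thesis by (metis append_Cons append_Nil append_take_drop_id)
qed

lemma decomp3: assumes "Suc (Suc i) < length ws"
  shows "ws = take i ws @ [ws!i, ws!Suc i, ws!Suc (Suc i)] @ drop (Suc (Suc (Suc i))) ws"
proof -
  have "drop i ws = ws!i # ws!Suc i # ws!Suc (Suc i) # drop (Suc (Suc (Suc i))) ws"
    using assms by (metis Cons_nth_drop_Suc Suc_lessD)
  then show ?thesis by (metis append_Cons append_Nil append_take_drop_id)
qed

lemma main_case_C:
  assumes N2: "N \<ge> 2" and st: "\<forall>w\<in>set ws. star N w" and ne: "ws \<noteq> []"
    and IH: "\<And>ys. length ys < length ws \<Longrightarrow> \<forall>w\<in>set ys. star N w \<Longrightarrow>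
        (perm_length N (prodw ys) + length ys \<le> 2 * card (set ys) \<longleftrightarrow> nc12 ys)"
    and c2: "\<forall>x\<in>set ws. count_list ws x = 2"
    and noadj: "\<forall>i. Suc i < length ws \<longrightarrow> ws!i \<noteq> ws!Suc i"
  shows "perm_length N (prodw ws) \<noteq> 0"
proof
  assume z: "perm_length N (prodw ws) = 0"
  have W: "wordof N ws (prodw ws)" using star_word[OF N2 st] .
  have pid: "prodw ws = id" using pl_zero[OF W z] .
  obtain ys w where ws: "ws = ys @ [w]" using ne by (metis rev_exhaust)
  have sw: "star N w" using st ws by simp
  have sys: "\<forall>v\<in>set ys. star N v" using st ws by simp
  have tw: "is_transp N w" using star_props(4)[OF sw N2] .
  have "prodw ys \<circ> w = id" using pid ws by (simp only: prodw_append prodw_Cons prodw_Nil comp_id)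
  then have pys: "prodw ys = w" using tw by (metis comp_assoc comp_id is_transp_comp_self)
  have Lys: "perm_length N (prodw ys) \<le> 1" using pl_le[OF wordof_single[OF tw]] pys by simp
  have "w \<in> set ws" using ws by simp
  then have "count_list ws w = 2" using c2 by blast
  then have cw: "count_list ys w = 1" using ws by simp
  have wys: "w \<in> set ys" using cw count_notin by fastforce
  have setys: "set ys = set ws" using ws wys by auto
  have len: "length ws = (\<Sum>x\<in>set ws. count_list ws x)" using sum_count_set[of ws "set ws"] by simp
  also have "\<dots> = (\<Sum>x\<in>set ws. 2)" using c2 by (intro sum.cong) auto
  finally have lenws: "length ws = 2 * card (set ws)" by simp
  have "length ws = length ys + 1" using ws by simp
  then have lenys: "length ys + 1 = 2 * card (set ys)" using lenws setys by simp
  have "perm_length N (prodw ys) + length ys \<le> 2 * card (set ys)" using Lys lenys by simp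
  then have nc: "nc12 ys" using IH[of ys] sys ws by simp
  then have ncr: "\<not> crossi ys" by (simp add: nc12_def)
  have cys: "\<forall>x\<in>set ys. x \<noteq> w \<longrightarrow> count_list ys x = 2"
  proof (intro ballI impI)
    fix x assume "x \<in> set ys" "x \<noteq> w"
    then have "count_list ws x = 2" using c2 setys by blast
    then show "count_list ys x = 2" using ws \<open>x \<noteq> w\<close> by simp
  qed
  have noadj': "\<forall>i. Suc i < length ys \<longrightarrow> ys!i \<noteq> ys!Suc i"
  proof (intro allI impI)
    fix i assume "Suc i < length ys"
    then have "ws!i = ys!i" "ws!Suc i = ys!Suc i" "Suc i < length ws" using ws by (auto simp: nth_append)
    then show "ys!i \<noteq> ys!Suc i" using noadj by metis
  qed
  have "\<exists>x\<in>set ys. x \<noteq> w"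
  proof (rule ccontr)
    assume "\<not> ?thesis"
    then have "filter ((=) w) ys = ys" by (auto simp: filter_id_conv)
    then have "length ys = 1" using cw by (simp add: count_list_eq_length_filter)
    then have "ys = [w]" using wys by (auto simp: length_Suc_conv)
    then show False using noadj[rule_format, of 0] ws by simp
  qed
  then obtain x where x: "x \<in> set ys" "x \<noteq> w" by blast
  obtain i0 where i0: "i0 < length ys" "ys!i0 = x" using x(1) by (metis in_set_conv_nth)
  obtain k0 where k0: "k0 < length ys" "k0 \<noteq> i0" "ys!k0 = ys!i0"
    using other_occ[of ys i0] cys x i0 by auto
  obtain i j where ij: "i < j" "j < length ys" "ys!i = ys!j"
    "\<forall>i' j'. i' < j' \<and> j' < length ys \<and> ys!i' = ys!j' \<longrightarrow> j - i \<le> j' - i'"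
  proof (cases "i0 < k0")
    case True then show ?thesis using mingap_ex[of i0 k0 ys] that i0 k0 by metis
  next
    case False then have "k0 < i0" using k0 by simp
    then show ?thesis using mingap_ex[of k0 i0 ys] that i0 k0 by metis
  qed
  have mg: "\<And>k k'. i < k \<Longrightarrow> k < j \<Longrightarrow> k' < length ys \<Longrightarrow> k' \<noteq> k \<Longrightarrow> ys!k' \<noteq> ys!k"
    using mingap[OF ncr ij(1-4)] by blast
  have "j \<noteq> Suc i" using noadj' ij by auto
  then have ij2: "Suc i < j" using ij by simp
  have inner: "ys!k = w" if ik: "i < k" "k < j" for k
  proof (rule ccontr)
    assume "ys!k \<noteq> w"
    then have "count_list ys (ys!k) = 2" using cys ik ij by auto
    moreover have "k < length ys" using ik ij by simp
    ultimately obtain k' where "k' < length ys" "k' \<noteq> k" "ys!k' = ys!k" using other_occ[of ys k] by auto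
    then show False using mg ik by blast
  qed
  have jeq: "j = Suc (Suc i)"
  proof (rule ccontr)
    assume "j \<noteq> Suc (Suc i)"
    then have "Suc (Suc i) < j" using ij2 by simp
    then have "ys!Suc (Suc i) = w" "ys!Suc i = w" using inner ij2 by auto
    then show False using mg[of "Suc i" "Suc (Suc i)"] ij2 \<open>Suc (Suc i) < j\<close> ij by auto
  qed
  define b where "b = ys!i"
  have bw: "b \<noteq> w" using mg[of "Suc i" i] inner[of "Suc i"] ij2 ij b_def by auto
  have sb: "star N b" using sys ij b_def by auto
  define p where "p = take i ys"
  define q where "q = drop (Suc (Suc (Suc i))) ys"
  have ysd: "ys = p @ [b, w, b] @ q"
    using decomp3[of i ys] ij jeq inner[of "Suc i"] ij2 unfolding p_def q_def b_def by auto
  have cb: "count_list ys b = 2" using cys bw ij b_def by auto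
  have wp: "w \<notin> set p" "w \<notin> set q" using cw ysd bw by (auto simp: count_list_0_iff[symmetric])
  have bp: "b \<notin> set p" "b \<notin> set q" using cb ysd bw by (auto simp: count_list_0_iff[symmetric])
  have sp: "\<forall>v\<in>set p. star N v" and sq: "\<forall>v\<in>set q. star N v" using sys ysd by auto
  define a where "a = w N"
  define g where "g = b N"
  have wa: "w = transpose a N" "a \<noteq> N" using star_props[OF sw N2] a_def by auto
  have bg: "b = transpose g N" "g \<noteq> N" using star_props[OF sb N2] g_def by auto
  have ag: "a \<noteq> g" using wa bg bw by auto
  have fpa: "prodw p a = a" using prodw_fix_fresh[OF N2 sp sw wp(1)] a_def by simp
  have fqa: "prodw q a = a" using prodw_fix_fresh[OF N2 sq sw wp(2)] a_def by simp
  have fqg: "prodw q g = g" using prodw_fix_fresh[OF N2 sq sb bp(2)] g_def by simp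
  have injp: "inj (prodw p)" using bij_prodw[of p N] sp star_props(4)[OF _ N2] bij_is_inj by blast
  have injq: "inj (prodw q)" using bij_prodw[of q N] sq star_props(4)[OF _ N2] bij_is_inj by blast
  define v where "v = prodw q N"
  have va: "v \<noteq> a" using injq fqa wa(2) v_def by (metis inj_eq)
  have vg: "v \<noteq> g" using injq fqg bg(2) v_def by (metis inj_eq)
  have mid: "b (w (b v)) = v" using va vg ag wa bg by (auto simp: transpose_def)
  have "prodw ws a = prodw p (b (w (b (prodw q (w a)))))"
    using ws ysd by simp
  also have "\<dots> = prodw p v" using mid wa v_def by simp
  finally have "prodw ws a = prodw p v" .
  moreover have "prodw p v \<noteq> a" using injp fpa va by (metis inj_eq)
  ultimately show False using pid by simp
qed

lemma main_star:
  assumes N2: "N \<ge> 2" and st: "\<forall>w\<in>set ws. star N w"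
  shows "perm_length N (prodw ws) + length ws \<le> 2 * card (set ws) \<longleftrightarrow> nc12 ws"
  using st
proof (induction ws rule: length_induct)
  case (1 ws)
  have st: "\<forall>w\<in>set ws. star N w" using "1.prems" .
  have IH: "\<And>ys. length ys < length ws \<Longrightarrow> \<forall>w\<in>set ys. star N w \<Longrightarrow>
        (perm_length N (prodw ys) + length ys \<le> 2 * card (set ys) \<longleftrightarrow> nc12 ys)"
    using "1.IH" by blast
  show ?case
  proof (cases "ws = []")
    case True
    have P0: "perm_length N (prodw []) = 0" using pl_le[of N "[]" "prodw []"] by (simp add: wordof_def)
    have NC0: "nc12 ([] :: (nat \<Rightarrow> nat) list)" by (simp add: nc12_def crossi_def)
    show ?thesis unfolding True using P0 NC0 by (simp del: prodw_Nil)
  next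
    case ne: False
    show ?thesis
    proof (cases "\<exists>w\<in>set ws. count_list ws w = 1")
      case True
      then obtain w where w: "w \<in> set ws" "count_list ws w = 1" by blast
      then obtain p q where ws: "ws = p @ w # q" by (metis split_list)
      have wpq: "w \<notin> set p" "w \<notin> set q" using w(2) ws by (auto simp: count_list_0_iff[symmetric])
      have wqp: "w \<notin> set (q @ p)" using wpq by simp
      have sw: "star N w" using st w by blast
      have sqp: "\<forall>v\<in>set (q @ p). star N v" using st ws by auto
      have sp: "\<forall>v\<in>set (p @ [w]). star N v" and sq: "\<forall>v\<in>set q. star N v" using st ws by auto
      have "perm_length N (prodw ws) = perm_length N (prodw ((p @ [w]) @ q))" using ws by simp
      also have "\<dots> = perm_length N (prodw (q @ (p @ [w])))" using star_rot[OF N2 sp sq] .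
      also have "prodw (q @ (p @ [w])) = prodw (q @ p) \<circ> transpose (w N) N"
        using star_props(1)[OF sw N2] by (simp only: append_assoc[symmetric] prodw_append prodw_Cons prodw_Nil comp_id)
      also have "perm_length N \<dots> = perm_length N (prodw (q @ p)) + 1"
        using pl_fresh[OF star_word[OF N2 sqp] prodw_fix_fresh[OF N2 sqp sw wqp]] star_props(2,3)[OF sw N2] by blast
      finally have L: "perm_length N (prodw ws) = perm_length N (prodw (q @ p)) + 1" .
      have "nc12 ws \<longleftrightarrow> nc12 ((p @ [w]) @ q)" using ws by simp
      also have "\<dots> \<longleftrightarrow> nc12 (q @ (p @ [w]))" using nc12_rot by blast
      also have "\<dots> \<longleftrightarrow> nc12 ((q @ p) @ [w])" by simp
      also have "\<dots> \<longleftrightarrow> nc12 (q @ p)" using nc12_snoc_fresh[OF wqp] .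
      finally have NC: "nc12 ws \<longleftrightarrow> nc12 (q @ p)" .
      have C: "card (set ws) = Suc (card (set (q @ p)))"
      proof -
        have "set ws = insert w (set (q @ p))" using ws by auto
        then show ?thesis using wqp by simp
      qed
      have Le: "length ws = Suc (length (q @ p))" using ws by simp
      have "perm_length N (prodw (q @ p)) + length (q @ p) \<le> 2 * card (set (q @ p)) \<longleftrightarrow> nc12 (q @ p)"
        using IH[OF _ sqp] Le by simp
      then show ?thesis using L NC C Le by simp
    next
      case nosing: False
      show ?thesis
      proof (cases "\<exists>i. Suc i < length ws \<and> ws!i = ws!Suc i")
        case True
        then obtain i where i: "Suc i < length ws" "ws!i = ws!Suc i" by blast
        define w where "w = ws!i"
        define p where "p = take i ws"
        define q where "q = drop (Suc (Suc i)) ws"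
        have ws: "ws = p @ [w, w] @ q" using decomp2[OF i(1)] i(2) unfolding w_def p_def q_def by simp
        have sw: "star N w" using st ws by simp
        have tw: "is_transp N w" using star_props(4)[OF sw N2] .
        have sqp: "\<forall>v\<in>set (q @ p). star N v" using st ws by auto
        have sp: "\<forall>v\<in>set (p @ [w, w]). star N v" and sq: "\<forall>v\<in>set q. star N v" using st ws by auto
        have "perm_length N (prodw ws) = perm_length N (prodw ((p @ [w, w]) @ q))" using ws by simp
        also have "\<dots> = perm_length N (prodw (q @ (p @ [w, w])))" using star_rot[OF N2 sp sq] .
        also have "prodw (q @ (p @ [w, w])) = prodw (q @ p) \<circ> (w \<circ> w)"
          by (simp only: append_assoc[symmetric] prodw_append prodw_Cons prodw_Nil comp_id comp_assoc)
        also have "\<dots> = prodw (q @ p)" using is_transp_comp_self[OF tw] by simp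
        finally have L: "perm_length N (prodw ws) = perm_length N (prodw (q @ p))" .
        have Le: "length ws = length (q @ p) + 2" using ws by simp
        show ?thesis
        proof (cases "w \<in> set (q @ p)")
          case True
          have "count_list ws w = count_list (q @ p) w + 2" using ws by simp
          moreover have "count_list (q @ p) w \<ge> 1" using True count_list_0_iff[of "q @ p" w] by linarith
          ultimately have "\<not> nc12 ws" unfolding nc12_def by (metis add_le_same_cancel2 le_antisym not_one_le_zero add_leD2 numeral_le_iff semiring_norm(68) le_add2 order.trans)
          moreover have "set ws = set (q @ p)" using ws True by auto
          moreover have "2 * card (set (q @ p)) \<le> perm_length N (prodw (q @ p)) + length (q @ p)"
            using lowerQ[OF N2 sqp] .
          ultimately show ?thesis using L Le by simp
        next
          case False
          have "nc12 ws \<longleftrightarrow> nc12 ((p @ [w, w]) @ q)" using ws by simp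
          also have "\<dots> \<longleftrightarrow> nc12 (q @ (p @ [w, w]))" using nc12_rot by blast
          also have "\<dots> \<longleftrightarrow> nc12 ((q @ p) @ [w, w])" by simp
          also have "\<dots> \<longleftrightarrow> nc12 (q @ p)" using nc12_snoc2_fresh[OF False] .
          finally have NC: "nc12 ws \<longleftrightarrow> nc12 (q @ p)" .
          have C: "card (set ws) = Suc (card (set (q @ p)))"
          proof -
            have "set ws = insert w (set (q @ p))" using ws by auto
            then show ?thesis using False by simp
          qed
          have "perm_length N (prodw (q @ p)) + length (q @ p) \<le> 2 * card (set (q @ p)) \<longleftrightarrow> nc12 (q @ p)"
            using IH[OF _ sqp] Le by simp
          then show ?thesis using L NC C Le by simp
        qed
      next
        case noadj0: False
        have noadj: "\<forall>i. Suc i < length ws \<longrightarrow> ws!i \<noteq> ws!Suc i" using noadj0 by blast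
        have cnt2: "count_list ws x \<ge> 2" if "x \<in> set ws" for x
        proof -
          have "count_list ws x \<noteq> 0" using that count_list_0_iff[of ws x] by blast
          moreover have "count_list ws x \<noteq> 1" using that nosing by blast
          ultimately show ?thesis by linarith
        qed
        have notnc: "\<not> nc12 ws"
        proof
          assume "nc12 ws"
          then have ncr: "\<not> crossi ws" by (simp add: nc12_def)
          have l0: "0 < length ws" using ne by simp
          obtain k0 where k0: "k0 < length ws" "k0 \<noteq> 0" "ws!k0 = ws!0"
            using other_occ[OF cnt2 l0] l0 by (metis nth_mem)
          obtain i j where ij: "i < j" "j < length ws" "ws!i = ws!j"
            "\<forall>i' j'. i' < j' \<and> j' < length ws \<and> ws!i' = ws!j' \<longrightarrow> j - i \<le> j' - i'"
            using mingap_ex[of 0 k0 ws] k0 by (metis neq0_conv)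
          have "j \<noteq> Suc i" using noadj ij by auto
          then have ij2: "Suc i < j" using ij by simp
          have "Suc i < length ws" using ij2 ij by simp
          then obtain k' where "k' < length ws" "k' \<noteq> Suc i" "ws!k' = ws!Suc i"
            using other_occ[OF cnt2] by (metis nth_mem)
          then show False using mingap[OF ncr ij(1-4), of "Suc i" k'] ij2 by simp
        qed
        have len: "length ws = (\<Sum>x\<in>set ws. count_list ws x)" using sum_count_set[of ws "set ws"] by simp
        have "\<not> perm_length N (prodw ws) + length ws \<le> 2 * card (set ws)"
        proof (cases "\<exists>x\<in>set ws. count_list ws x \<ge> 3")
          case True
          then obtain x where x: "x \<in> set ws" "count_list ws x \<ge> 3" by blast
          have "(\<Sum>x\<in>set ws. count_list ws x) = count_list ws x + (\<Sum>y\<in>set ws - {x}. count_list ws y)"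
            using x(1) by (simp add: sum.remove)
          moreover have "(\<Sum>y\<in>set ws - {x}. count_list ws y) \<ge> (\<Sum>y\<in>set ws - {x}. 2)"
            using cnt2 by (intro sum_mono) auto
          moreover have "card (set ws - {x}) + 1 = card (set ws)" using x(1)
            by (metis One_nat_def Suc_pred card_Diff_singleton card_gt_0_iff empty_iff finite_set add.commute plus_1_eq_Suc)
          ultimately have "length ws > 2 * card (set ws)" using len x(2) by simp
          then show ?thesis by simp
        next
          case False
          have c2: "\<forall>x\<in>set ws. count_list ws x = 2" using False cnt2 by (metis not_less_eq_eq numeral_2_eq_2 numeral_3_eq_3 le_antisym)
          have "perm_length N (prodw ws) \<noteq> 0" using main_case_C[OF N2 st ne IH c2 noadj] by blast
          moreover have "length ws = 2 * card (set ws)"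
          proof -
            have "(\<Sum>x\<in>set ws. count_list ws x) = (\<Sum>x\<in>set ws. 2)" using c2 by (intro sum.cong) auto
            then show ?thesis using len by simp
          qed
          ultimately show ?thesis by simp
        qed
        then show ?thesis using notnc by simp
      qed
    qed
  qed
qed

declare upt_Suc[simp del]

definition blk :: "(nat \<Rightarrow> 'b) \<Rightarrow> nat \<Rightarrow> 'b \<Rightarrow> nat set" where
  "blk a m v = {k \<in> {1..m}. a k = v}"

lemma kp_eq: "kernel_partition a m = blk a m ` (a ` {1..m})"
  unfolding kernel_partition_def blk_def by auto

lemma blk_inj: "inj_on (blk a m) (a ` {1..m})"
proof
  fix v v' assume "v \<in> a ` {1..m}" "v' \<in> a ` {1..m}" "blk a m v = blk a m v'"
  then obtain j where "j \<in> {1..m}" "a j = v" by blast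
  then have "j \<in> blk a m v" by (simp add: blk_def)
  then have "j \<in> blk a m v'" using \<open>blk a m v = blk a m v'\<close> by simp
  then show "v = v'" using \<open>a j = v\<close> by (simp add: blk_def)
qed

lemma set_ws: "set (map a [1..<m+1]) = a ` {1..m}"
  by auto

lemma card_kp: "card (kernel_partition a m) = card (set (map a [1..<m+1]))"
  unfolding kp_eq set_ws using card_image[OF blk_inj] by simp

lemma nth_ws: "i < m \<Longrightarrow> map a [1..<m+1] ! i = a (Suc i)"
  by simp

lemma len_ws: "length (map a [1..<m+1]) = m" by simp

lemma card_blk: "card (blk a m v) = count_list (map a [1..<m+1]) v"
proof -
  have "count_list (map a [1..<m+1]) v = length (filter (\<lambda>k. v = a k) [1..<m+1])"
    by (simp add: count_list_eq_length_filter filter_map comp_def)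
  also have "\<dots> = card ({k. v = a k} \<inter> set [1..<m+1])" by (rule distinct_length_filter) simp
  also have "{k. v = a k} \<inter> set [1..<m+1] = blk a m v" unfolding blk_def by auto
  finally show ?thesis by simp
qed

lemma partition_kp: "partition_on {1..m} (kernel_partition a m)"
proof (rule partition_onI)
  show "\<Union>(kernel_partition a m) = {1..m}" unfolding kp_eq blk_def by auto
next
  fix p q assume "p \<in> kernel_partition a m" "q \<in> kernel_partition a m" "p \<noteq> q"
  then obtain v v' where v: "p = blk a m v" "q = blk a m v'" unfolding kp_eq by blast
  then have "v \<noteq> v'" using \<open>p \<noteq> q\<close> by blast
  then show "disjnt p q" unfolding v blk_def disjnt_def by blast
next
  show "{} \<notin> kernel_partition a m"
  proof
    assume "{} \<in> kernel_partition a m"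
    then obtain j where "j \<in> {1..m}" "{} = blk a m (a j)" unfolding kp_eq by blast
    then show False unfolding blk_def by blast
  qed
qed

lemma sizes_kp: "(\<forall>B\<in>kernel_partition a m. card B = 1 \<or> card B = 2) \<longleftrightarrow>
    (\<forall>x. count_list (map a [1..<m+1]) x \<le> 2)"
proof
  assume h: "\<forall>B\<in>kernel_partition a m. card B = 1 \<or> card B = 2"
  show "\<forall>x. count_list (map a [1..<m+1]) x \<le> 2"
  proof
    fix x
    show "count_list (map a [1..<m+1]) x \<le> 2"
    proof (cases "x \<in> a ` {1..m}")
      case True
      then have "blk a m x \<in> kernel_partition a m" unfolding kp_eq by blast
      then show ?thesis using h card_blk[of a m x] by auto
    next
      case False
      then have "x \<notin> set (map a [1..<m+1])" using set_ws by metis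
      then show ?thesis by simp
    qed
  qed
next
  assume h: "\<forall>x. count_list (map a [1..<m+1]) x \<le> 2"
  show "\<forall>B\<in>kernel_partition a m. card B = 1 \<or> card B = 2"
  proof
    fix B assume "B \<in> kernel_partition a m"
    then obtain j where j: "j \<in> {1..m}" "B = blk a m (a j)" unfolding kp_eq by blast
    have "j \<in> B" using j by (simp add: blk_def)
    moreover have "finite B" using j by (simp add: blk_def)
    ultimately have "card B \<ge> 1" by (metis One_nat_def Suc_leI card_gt_0_iff empty_iff)
    moreover have "card B \<le> 2" using h card_blk[of a m "a j"] j by simp
    ultimately show "card B = 1 \<or> card B = 2" by linarith
  qed
qed

lemma crossiI: assumes "i < j" "j < k" "k < l" "l < length xs" "xs!i = xs!k" "xs!j = xs!l" "xs!i \<noteq> xs!j"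
  shows "crossi xs"
  unfolding crossi_def
  by (rule exI[of _ i], rule exI[of _ j], rule exI[of _ k], rule exI[of _ l]) (intro conjI; fact)

lemma noncrossingD: assumes "noncrossing P" "B \<in> P" "C \<in> P" "B \<noteq> C"
    "k1 < l1" "l1 < k2" "k2 < l2" "k1 \<in> B" "k2 \<in> B" "l1 \<in> C" "l2 \<in> C" shows False
proof -
  have "\<not> (\<exists>k1 l1 k2 l2. k1 < l1 \<and> l1 < k2 \<and> k2 < l2 \<and> k1 \<in> B \<and> k2 \<in> B \<and> l1 \<in> C \<and> l2 \<in> C)"
    using assms(1)[unfolded noncrossing_def, rule_format, OF assms(2) assms(3) assms(4)] .
  moreover have "\<exists>k1 l1 k2 l2. k1 < l1 \<and> l1 < k2 \<and> k2 < l2 \<and> k1 \<in> B \<and> k2 \<in> B \<and> l1 \<in> C \<and> l2 \<in> C"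
    by (rule exI[of _ k1], rule exI[of _ l1], rule exI[of _ k2], rule exI[of _ l2]) (intro conjI; fact)
  ultimately show False by (rule notE)
qed

lemma noncrossingI: assumes "\<And>B C k1 l1 k2 l2. B \<in> P \<Longrightarrow> C \<in> P \<Longrightarrow> B \<noteq> C \<Longrightarrow>
    k1 < l1 \<Longrightarrow> l1 < k2 \<Longrightarrow> k2 < l2 \<Longrightarrow> k1 \<in> B \<Longrightarrow> k2 \<in> B \<Longrightarrow> l1 \<in> C \<Longrightarrow> l2 \<in> C \<Longrightarrow> False"
  shows "noncrossing P"
  unfolding noncrossing_def
proof (intro ballI impI notI)
  fix B C assume h: "B \<in> P" "C \<in> P" "B \<noteq> C"
    "\<exists>k1 l1 k2 l2. k1 < l1 \<and> l1 < k2 \<and> k2 < l2 \<and> k1 \<in> B \<and> k2 \<in> B \<and> l1 \<in> C \<and> l2 \<in> C"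
  then obtain k1 l1 k2 l2 where "k1 < l1" "l1 < k2" "k2 < l2" "k1 \<in> B" "k2 \<in> B" "l1 \<in> C" "l2 \<in> C"
    by (elim exE conjE)
  then show False using assms h(1-3) by blast
qed

lemma noncrossing_kp: "noncrossing (kernel_partition a m) \<longleftrightarrow> \<not> crossi (map a [1..<m+1])"
proof
  assume nc: "noncrossing (kernel_partition a m)"
  show "\<not> crossi (map a [1..<m+1])"
  proof
    assume "crossi (map a [1..<m+1])"
    then obtain i j k l where c: "i < j" "j < k" "k < l" "l < m"
      "a (Suc i) = a (Suc k)" "a (Suc j) = a (Suc l)" "a (Suc i) \<noteq> a (Suc j)"
      unfolding crossi_def by auto
    let ?B = "blk a m (a (Suc i))" and ?C = "blk a m (a (Suc j))"
    have si: "Suc i \<in> {1..m}" and sj: "Suc j \<in> {1..m}" using c(1-4) by auto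
    have B: "?B \<in> kernel_partition a m" unfolding kp_eq using si by (intro imageI)
    have C: "?C \<in> kernel_partition a m" unfolding kp_eq using sj by (intro imageI)
    have mem: "Suc i \<in> ?B" "Suc k \<in> ?B" "Suc j \<in> ?C" "Suc l \<in> ?C" using c(1-6) by (simp_all add: blk_def)
    have "?B \<noteq> ?C"
    proof
      assume "?B = ?C"
      then have "Suc i \<in> ?C" using mem(1) by simp
      then show False using c(7) by (simp add: blk_def)
    qed
    have lt: "Suc i < Suc j" "Suc j < Suc k" "Suc k < Suc l" using c by simp_all
    show False using noncrossingD[OF nc B C \<open>?B \<noteq> ?C\<close> lt mem] .
  qed
next
  assume ncr: "\<not> crossi (map a [1..<m+1])"
  show "noncrossing (kernel_partition a m)"
  proof (rule noncrossingI)
    fix B C k1 l1 k2 l2 assume B: "B \<in> kernel_partition a m" and C: "C \<in> kernel_partition a m" and BC: "B \<noteq> C"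
      and o: "k1 < l1" "l1 < k2" "k2 < l2" "k1 \<in> B" "k2 \<in> B" "l1 \<in> C" "l2 \<in> C"
    obtain v where v: "B = blk a m v" using B unfolding kp_eq by blast
    obtain v' where v': "C = blk a m v'" using C unfolding kp_eq by blast
    have "v \<noteq> v'" using BC v v' by blast
    have m: "k1 \<in> {1..m}" "l1 \<in> {1..m}" "k2 \<in> {1..m}" "l2 \<in> {1..m}"
      "a k1 = v" "a k2 = v" "a l1 = v'" "a l2 = v'" using o v v' by (auto simp: blk_def)
    have e: "map a [1..<m+1] ! (k1 - 1) = v" "map a [1..<m+1] ! (k2 - 1) = v"
        "map a [1..<m+1] ! (l1 - 1) = v'" "map a [1..<m+1] ! (l2 - 1) = v'"
      using m by (auto simp: nth_ws)
    have ar: "k1 - 1 < l1 - 1" "l1 - 1 < k2 - 1" "k2 - 1 < l2 - 1" "l2 - 1 < length (map a [1..<m+1])"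
      using o(1-3) m(1-4) by auto
    have "crossi (map a [1..<m+1])"
      by (rule crossiI[OF ar]) (use e \<open>v \<noteq> v'\<close> in simp_all)
    then show False using ncr by simp
  qed
qed

lemma nc12_kp: "kernel_partition a m \<in> NC12 m \<longleftrightarrow> nc12 (map a [1..<m+1])"
proof -
  have "kernel_partition a m \<in> NC12 m \<longleftrightarrow> partition_on {1..m} (kernel_partition a m) \<and>
     noncrossing (kernel_partition a m) \<and> (\<forall>B\<in>kernel_partition a m. card B = 1 \<or> card B = 2)"
    unfolding NC12_def by (rule mem_Collect_eq)
  also have "\<dots> \<longleftrightarrow> nc12 (map a [1..<m+1])"
    unfolding nc12_def using partition_kp[of m a] sizes_kp[of a m] noncrossing_kp[of a m] by argo
  finally show ?thesis .
qed

lemma seq_prod_eq: "seq_prod a m = prodw (map a [1..<m+1])"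
proof -
  have "foldr (\<lambda>j f. a j \<circ> f) xs id = prodw (map a xs)" for xs
    by (induction xs) simp_all
  then show ?thesis unfolding seq_prod_def by simp
qed

theorem lemma5:
  fixes N m :: nat and a :: "nat \<Rightarrow> nat \<Rightarrow> nat"
  assumes "N \<ge> 2"
    and "\<forall>j\<in>{1..m}. \<exists>\<alpha>. 1 \<le> \<alpha> \<and> \<alpha> \<le> N - 1 \<and> a j = transpose \<alpha> N"
  shows "2 * card (kernel_partition a m) \<ge> perm_length N (seq_prod a m) + m
         \<longleftrightarrow> kernel_partition a m \<in> NC12 m"
proof -
  have st: "\<forall>w\<in>set (map a [1..<m+1]). star N w" using assms(2) unfolding star_def by auto
  show ?thesis
    using main_star[OF assms(1) st] unfolding card_kp seq_prod_eq nc12_kp len_ws by simp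
qed

end
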